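(* For every integer $k>2$, $N(2k+6,k)=2$ if $k\equiv1\pmod 3$ and $N(2k+6,k)=0$ if $k\not\equiv1\pmod3$.
   Context: For $n>k\ge1$, $N(n,k)$ is the nullity of the $n\times n$ skew-symmetric Toeplitz matrix $A(n,k)$ whose first $k$ superdiagonals have all entries $1$ and whose remaining superdiagonals have all entries $0$. *)

theory Defs
  imports "Jordan_Normal_Form.Matrix_Kernel"
begin

definition A_mat :: "nat \<Rightarrow> nat \<Rightarrow> real mat" where
  "A_mat n k = mat n n (\<lambda>(i, j).
      if i < j \<and> j - i \<le> k then 1
      else if j < i \<and> i - j \<le> k then -1
      else 0)"

definition N_null :: "nat \<Rightarrow> nat \<Rightarrow> nat" where
  "N_null n k = kernel_dim (A_mat n k)"

end

theory Submission
  imports Defs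
begin

lemma mat_kernel_minus:
  assumes A: "A \<in> carrier_mat n n" and x: "x \<in> mat_kernel A" and y: "y \<in> mat_kernel A"
  shows "x - y \<in> mat_kernel A"
proof -
  have xc: "x \<in> carrier_vec n" and yc: "y \<in> carrier_vec n" and ax: "A *\<^sub>v x = 0\<^sub>v n" and ay: "A *\<^sub>v y = 0\<^sub>v n"
    using mat_kernelD[OF A x] mat_kernelD[OF A y] by auto
  have "A *\<^sub>v (x - y) = A *\<^sub>v x - A *\<^sub>v y" using mult_minus_distrib_mat_vec[OF A xc yc] .
  also have "\<dots> = 0\<^sub>v n" using ax ay by auto
  finally show ?thesis by (intro mat_kernelI[OF A], insert xc yc, auto)
qed

lemma kernel_dim_two:
  assumes A: "(A::real mat) \<in> carrier_mat n n" and U: "U \<in> mat_kernel A" and V: "V \<in> mat_kernel A"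
    and p: "p < n" and q: "q < n" and Up: "U $ p = 1" and Uq: "U $ q = 0" and Vp: "V $ p = 0" and Vq: "V $ q = 1"
    and uniq: "\<And>x. x \<in> mat_kernel A \<Longrightarrow> x $ p = 0 \<Longrightarrow> x $ q = 0 \<Longrightarrow> x = 0\<^sub>v n"
  shows "kernel_dim A = 2"
proof -
  interpret kernel n n A by (unfold_locales, rule A)
  have UV: "U \<noteq> V" using Up Vp by (metis zero_neq_one)
  have sub: "{U, V} \<subseteq> mat_kernel A" using U V by simp
  have li: "lin_indpt {U, V}"
    apply (rule Ker.finite_lin_indpt2)
    subgoal by simp
    subgoal using sub by simp
    subgoal for a
    proof -
      assume lc: "lincomb a {U, V} = 0\<^sub>v n"
      have "lincomb a {U,V} $ p = a U * U $ p + a V * V $ p"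
        using lincomb_index[OF p sub] UV by simp
      hence ap: "a U = 0" using lc Up Vp p by simp
      have "lincomb a {U,V} $ q = a U * U $ q + a V * V $ q"
        using lincomb_index[OF q sub] UV by simp
      hence aq: "a V = 0" using lc Uq Vq q by simp
      show "\<forall>v\<in>{U, V}. a v = 0" using ap aq by simp
    qed
    done
  have gen: "span {U, V} = mat_kernel A"
  proof
    show "span {U, V} \<subseteq> mat_kernel A" using Ker.span_is_subset2[OF sub] by simp
  next
    show "mat_kernel A \<subseteq> span {U, V}"
    proof
      fix x assume x: "x \<in> mat_kernel A"
      define a where "a = (\<lambda>w. if w = U then x $ p else x $ q)"
      have lk: "lincomb a {U, V} \<in> mat_kernel A"
        using Ker.lincomb_closed[OF sub] by simp
      have d: "x - lincomb a {U, V} \<in> mat_kernel A" by (rule mat_kernel_minus[OF A x lk])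
      have lp: "lincomb a {U,V} $ p = x $ p"
        using lincomb_index[OF p sub] UV Up Vp unfolding a_def by simp
      have lq: "lincomb a {U,V} $ q = x $ q"
        using lincomb_index[OF q sub] UV Uq Vq unfolding a_def by simp
      have xc: "x \<in> carrier_vec n" and lc: "lincomb a {U,V} \<in> carrier_vec n"
        using mat_kernel_carrier[OF A] x lk by auto
      have "x - lincomb a {U, V} = 0\<^sub>v n"
        by (rule uniq[OF d], insert lp lq xc lc p q, auto)
      hence "x = lincomb a {U, V}"
      proof -
        assume e: "x - lincomb a {U, V} = 0\<^sub>v n"
        show ?thesis
        proof (rule eq_vecI)
          fix i assume "i < dim_vec (lincomb a {U, V})"
          hence i: "i < n" using lc by auto
          have "(x - lincomb a {U, V}) $ i = 0" using e i by simp
          thus "x $ i = lincomb a {U, V} $ i" using i xc lc by simp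
        qed (use xc lc in auto)
      qed
      thus "x \<in> span {U, V}" using Ker.finite_span[of "{U,V}"] sub by auto
    qed
  qed
  have b: "basis {U, V}" unfolding Ker.basis_def using li gen sub by auto
  have "dim = card {U, V}" by (rule Ker.dim_basis[OF _ b], simp)
  thus ?thesis using UV by simp
qed

lemma kernel_dim_zero:
  assumes A: "(A :: real mat) \<in> carrier_mat n n" and Z: "\<And>x. x \<in> mat_kernel A \<Longrightarrow> x = 0\<^sub>v n"
  shows "kernel_dim A = 0"
proof -
  have I: "(1\<^sub>m n :: real mat) \<in> carrier_mat n n" by simp
  have z: "A *\<^sub>v 0\<^sub>v n = 0\<^sub>v n"
    by (rule eq_vecI) (insert A, auto simp: scalar_prod_def)
  have zk: "0\<^sub>v n \<in> mat_kernel A" by (rule mat_kernelI[OF A _ z]) simp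
  have e1: "mat_kernel A = {0\<^sub>v n}"
  proof
    show "mat_kernel A \<subseteq> {0\<^sub>v n}" using Z by blast
    show "{0\<^sub>v n} \<subseteq> mat_kernel A" using zk by simp
  qed
  have e2: "mat_kernel (1\<^sub>m n :: real mat) = {0\<^sub>v n}"
  proof
    show "mat_kernel (1\<^sub>m n :: real mat) \<subseteq> {0\<^sub>v n}"
    proof
      fix v assume v: "v \<in> mat_kernel (1\<^sub>m n :: real mat)"
      have vc: "v \<in> carrier_vec n" and "1\<^sub>m n *\<^sub>v v = 0\<^sub>v n" using mat_kernelD[OF I v] by auto
      hence "v = 0\<^sub>v n" using one_mult_mat_vec[OF vc] by simp
      thus "v \<in> {0\<^sub>v n}" by simp
    qed
    have "(1\<^sub>m n :: real mat) *\<^sub>v 0\<^sub>v n = 0\<^sub>v n" by (rule one_mult_mat_vec) simp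
    hence "0\<^sub>v n \<in> mat_kernel (1\<^sub>m n :: real mat)" by (intro mat_kernelI[OF I]) simp_all
    thus "{0\<^sub>v n} \<subseteq> mat_kernel (1\<^sub>m n :: real mat)" by simp
  qed
  have eq: "mat_kernel A = mat_kernel (1\<^sub>m n)" using e1 e2 by simp
  have "kernel_dim A = kernel.dim n A" unfolding kernel_dim_def using A by simp
  also have "\<dots> = kernel.dim n (1\<^sub>m n :: real mat)" unfolding eq ..
  also have "\<dots> = 0" by (rule kernel_one_mat)
  finally show ?thesis .
qed

definition ext :: "real vec \<Rightarrow> nat \<Rightarrow> real" where
  "ext x j = (if j < dim_vec x then x $ j else 0)"

definition Dc :: "nat \<Rightarrow> (nat \<Rightarrow> real) \<Rightarrow> nat \<Rightarrow> bool" where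
  "Dc k f i \<longleftrightarrow> f (i + k + 1) + (if k \<le> i then f (i - k) else 0) = f i + f (Suc i)"

lemma sum_trunc:
  fixes e :: "nat \<Rightarrow> real"
  assumes "c \<le> M"
  shows "(\<Sum>j<M. if j < c then e j else 0) = (\<Sum>j<c. e j)"
  using assms
proof (induct M)
  case 0 thus ?case by simp
next
  case (Suc M)
  show ?case
  proof (cases "c \<le> M")
    case True thus ?thesis using Suc by simp
  next
    case False
    hence c: "c = Suc M" using Suc by simp
    show ?thesis unfolding c by (rule sum.cong, auto)
  qed
qed

lemma sum_ext_zero:
  fixes h :: "nat \<Rightarrow> real"
  assumes "\<And>j. n \<le> j \<Longrightarrow> h j = 0" "n \<le> M"
  shows "(\<Sum>j<M. h j) = (\<Sum>j<n. h j)"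
  by (rule sum.mono_neutral_right) (use assms in auto)

lemma A_row:
  fixes x :: "real vec"
  assumes x: "x \<in> carrier_vec n" and i: "i < n"
  defines "F \<equiv> \<lambda>m. \<Sum>j<m. ext x j"
  shows "(A_mat n k *\<^sub>v x) $ i = (F (i + k + 1) - F (i + 1)) - (F i - F (i - k))"
proof -
  let ?e = "ext x"
  define M where "M = n + i + k + 1"
  have e0: "\<And>j. n \<le> j \<Longrightarrow> ?e j = 0" using x unfolding ext_def by auto
  have "(A_mat n k *\<^sub>v x) $ i = (\<Sum>j<n. (if i < j \<and> j - i \<le> k then 1
      else if j < i \<and> i - j \<le> k then -1 else 0) * ?e j)"
    using x i unfolding A_mat_def ext_def
    by (auto simp: scalar_prod_def lessThan_atLeast0 intro!: sum.cong)
  also have "\<dots> = (\<Sum>j<n. (if j < i + k + 1 then ?e j else 0) - (if j < i + 1 then ?e j else 0)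
        - ((if j < i then ?e j else 0) - (if j < i - k then ?e j else 0)))"
    by (rule sum.cong, auto)
  also have "\<dots> = (\<Sum>j<M. (if j < i + k + 1 then ?e j else 0) - (if j < i + 1 then ?e j else 0)
        - ((if j < i then ?e j else 0) - (if j < i - k then ?e j else 0)))"
    by (rule sum_ext_zero[symmetric], insert e0, auto simp: M_def)
  also have "\<dots> = (F (i + k + 1) - F (i + 1)) - (F i - F (i - k))"
    unfolding sum_subtractf F_def
    by (subst (1 2 3 4) sum_trunc, auto simp: M_def)
  finally show ?thesis .
qed

lemma G_step:
  fixes e :: "nat \<Rightarrow> real" and k :: nat
  defines "F \<equiv> \<lambda>m. \<Sum>j<m. e j"
  defines "G \<equiv> \<lambda>i. (F (i + k + 1) - F (i + 1)) - (F i - F (i - k))"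
  shows "G (Suc i) - G i = e (i + k + 1) - e (Suc i) - e i + (if k \<le> i then e (i - k) else 0)"
proof -
  have FS: "\<And>m. F (Suc m) = F m + e m" unfolding F_def by simp
  have a: "Suc i + k + 1 = Suc (i + k + 1)" by simp
  show ?thesis
  proof (cases "k \<le> i")
    case True
    hence "Suc i - k = Suc (i - k)" by simp
    thus ?thesis unfolding G_def a using True FS by simp
  next
    case False
    hence "Suc i - k = i - k" by simp
    thus ?thesis unfolding G_def a using False FS by simp
  qed
qed

lemma G_zero:
  fixes e :: "nat \<Rightarrow> real"
  defines "F \<equiv> \<lambda>m. \<Sum>j<m. e j"
  shows "(F (0 + k + 1) - F (0 + 1)) - (F 0 - F (0 - k)) = (\<Sum>j\<in>{1..k}. e j)"
proof -
  have "F (k + 1) - F 1 = (\<Sum>j\<in>{1..k}. e j)" unfolding F_def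
    by (induct k, auto)
  thus ?thesis unfolding F_def by simp
qed

lemma kernel_iff:
  fixes x :: "real vec"
  assumes x: "x \<in> carrier_vec n"
  shows "x \<in> mat_kernel (A_mat n k) \<longleftrightarrow>
    (0 < n \<longrightarrow> (\<Sum>j\<in>{1..k}. ext x j) = 0) \<and> (\<forall>i. Suc i < n \<longrightarrow> Dc k (ext x) i)"
proof -
  define F where "F = (\<lambda>m. \<Sum>j<m. ext x j)"
  define G where "G = (\<lambda>i. (F (i + k + 1) - F (i + 1)) - (F i - F (i - k)))"
  have Ac: "A_mat n k \<in> carrier_mat n n" unfolding A_mat_def by simp
  have "x \<in> mat_kernel (A_mat n k) \<longleftrightarrow> (\<forall>i<n. G i = 0)"
  proof -
    have "x \<in> mat_kernel (A_mat n k) \<longleftrightarrow> A_mat n k *\<^sub>v x = 0\<^sub>v n"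
      using mat_kernel[OF Ac] x by auto
    also have "\<dots> \<longleftrightarrow> (\<forall>i<n. (A_mat n k *\<^sub>v x) $ i = 0)"
      using Ac by (auto simp: vec_eq_iff)
    also have "\<dots> \<longleftrightarrow> (\<forall>i<n. G i = 0)"
      using A_row[OF x] unfolding G_def F_def by simp
    finally show ?thesis .
  qed
  also have "\<dots> \<longleftrightarrow> (0 < n \<longrightarrow> G 0 = 0) \<and> (\<forall>i. Suc i < n \<longrightarrow> G (Suc i) - G i = 0)"
  proof
    assume "\<forall>i<n. G i = 0" thus "(0 < n \<longrightarrow> G 0 = 0) \<and> (\<forall>i. Suc i < n \<longrightarrow> G (Suc i) - G i = 0)"
      by simp
  next
    assume h: "(0 < n \<longrightarrow> G 0 = 0) \<and> (\<forall>i. Suc i < n \<longrightarrow> G (Suc i) - G i = 0)"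
    show "\<forall>i<n. G i = 0"
    proof (intro allI impI)
      fix i assume "i < n" thus "G i = 0"
        by (induct i, insert h, auto)
    qed
  qed
  also have "\<dots> \<longleftrightarrow> (0 < n \<longrightarrow> (\<Sum>j\<in>{1..k}. ext x j) = 0) \<and> (\<forall>i. Suc i < n \<longrightarrow> Dc k (ext x) i)"
  proof -
    have "G 0 = (\<Sum>j\<in>{1..k}. ext x j)" unfolding G_def F_def using G_zero by simp
    moreover have "\<And>i. G (Suc i) - G i = 0 \<longleftrightarrow> Dc k (ext x) i"
      unfolding G_def F_def Dc_def G_step by auto
    ultimately show ?thesis by simp
  qed
  finally show ?thesis .
qed



locale recf =
  fixes k :: nat and f :: "nat \<Rightarrow> real"
  assumes D: "\<And>i. i \<le> 2*k+4 \<Longrightarrow> Dc k f i"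
begin

lemma Dge: "i \<le> 2*k+4 \<Longrightarrow> m = i+k+1 \<Longrightarrow> i1 = Suc i \<Longrightarrow> k \<le> i \<Longrightarrow> i0 = i - k \<Longrightarrow>
   f m = f i + f i1 - f i0"
  using D[of i] unfolding Dc_def by simp

lemma Dlt: "i \<le> 2*k+4 \<Longrightarrow> m = i+k+1 \<Longrightarrow> i1 = Suc i \<Longrightarrow> i < k \<Longrightarrow>
   f m = f i + f i1"
  using D[of i] unfolding Dc_def by simp

lemma L1: "i < k \<Longrightarrow> f (k+1+i) = f i + f (i+1)"
  by (rule Dlt) auto

lemma L3: "j + 2 \<le> k \<Longrightarrow> f (2*k+2+j) = f j + f (j+1) + f (j+2)"
proof -
  assume j: "j + 2 \<le> k"
  have "f (2*k+2+j) = f (k+1+j) + f (k+1+(j+1)) - f (j+1)" by (rule Dge) (use j in auto)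
  moreover have "f (k+1+j) = f j + f (j+1)" using L1[of j] j by simp
  moreover have "f (k+1+(j+1)) = f (j+1) + f (j+1+1)" using L1[of "j+1"] j by simp
  moreover have "j+1+1 = j+2" by simp
  ultimately show ?thesis by simp
qed

lemma L2: "0 < k \<Longrightarrow> f (2*k+1) = f k + f 1"
proof -
  assume k: "0 < k"
  have "f (2*k+1) = f k + f (k+1+0) - f 0" by (rule Dge) (use k in auto)
  moreover have "f (k+1+0) = f 0 + f (0+1)" using L1[of 0] k by simp
  ultimately show ?thesis by simp
qed

lemma L4: "0 < k \<Longrightarrow> f (3*k+1) = f (k-1) + f k + f 1"
proof -
  assume k: "0 < k"
  have "f (3*k+1) = f (k+1+(k-1)) + f (2*k+1) - f k" by (rule Dge) (use k in auto)
  moreover have "f (k+1+(k-1)) = f (k-1) + f (k-1+1)" using L1[of "k-1"] k by simp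
  moreover have "k-1+1 = k" using k by simp
  ultimately show ?thesis using L2 k by simp
qed

lemma L5: "2 \<le> k \<Longrightarrow> f (3*k+2) = f k + f 1 + f 2"
proof -
  assume k: "2 \<le> k"
  have "f (3*k+2) = f (2*k+1) + f (2*k+2+0) - f (k+1+0)" by (rule Dge) (use k in auto)
  moreover have "f (k+1+0) = f 0 + f (0+1)" using L1[of 0] k by simp
  moreover have "f (2*k+2+0) = f 0 + f (0+1) + f (0+2)" using L3[of 0] k by simp
  ultimately show ?thesis using L2 k by (simp add: eval_nat_numeral)
qed

lemma E012:
  assumes k: "5 \<le> k"
  shows "f (3*k+3) = f 0 + f 1 + f 2 + f 3"
    "f (3*k+4) = f 1 + f 2 + f 3 + f 4"
    "f (3*k+5) = f 2 + f 3 + f 4 + f 5"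
proof -
  have a0: "f (2*k+2+0) = f 0 + f (0+1) + f (0+2)" using L3[of 0] k by simp
  have a1: "f (2*k+2+1) = f 1 + f (1+1) + f (1+2)" using L3[of 1] k by simp
  have a2: "f (2*k+2+2) = f 2 + f (2+1) + f (2+2)" using L3[of 2] k by simp
  have a3: "f (2*k+2+3) = f 3 + f (3+1) + f (3+2)" using L3[of 3] k by simp
  have b1: "f (k+1+1) = f 1 + f (1+1)" using L1[of 1] k by simp
  have b2: "f (k+1+2) = f 2 + f (2+1)" using L1[of 2] k by simp
  have b3: "f (k+1+3) = f 3 + f (3+1)" using L1[of 3] k by simp
  have c0: "f (3*k+3) = f (2*k+2+0) + f (2*k+2+1) - f (k+1+1)" by (rule Dge) (use k in auto)
  have c1: "f (3*k+4) = f (2*k+2+1) + f (2*k+2+2) - f (k+1+2)" by (rule Dge) (use k in auto)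
  have c2: "f (3*k+5) = f (2*k+2+2) + f (2*k+2+3) - f (k+1+3)" by (rule Dge) (use k in auto)
  show "f (3*k+3) = f 0 + f 1 + f 2 + f 3" using a0 a1 b1 c0 by (simp add: eval_nat_numeral)
  show "f (3*k+4) = f 1 + f 2 + f 3 + f 4" using a1 a2 b2 c1 by (simp add: eval_nat_numeral)
  show "f (3*k+5) = f 2 + f 3 + f 4 + f 5" using a2 a3 b3 c2 by (simp add: eval_nat_numeral)
qed

end



definition P :: "real \<Rightarrow> real \<Rightarrow> nat \<Rightarrow> real" where
  "P a b j = (if j mod 3 = 1 then a else if j mod 3 = 2 then b else -(a+b))"

lemma mod3_cases: "(n::nat) mod 3 = 0 \<or> n mod 3 = 1 \<or> n mod 3 = 2"
proof -
  have "n mod 3 < 3" by simp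
  thus ?thesis by linarith
qed

lemma mod3_suc: "Suc n mod 3 = (if n mod 3 = 2 then 0 else Suc (n mod 3))"
  by (simp add: mod_Suc)

lemma P_triple: "P a b j + P a b (j+1) + P a b (j+2) = 0"
  using mod3_cases[of j] unfolding P_def by (auto simp: mod3_suc)

lemma P_sum: "3 \<le> m \<Longrightarrow> (\<Sum>j\<in>{4..m}. P a b j) = (if m mod 3 = 0 then 0 else if m mod 3 = 1 then a else a + b)"
proof (induct m rule: dec_induct)
  case base thus ?case by simp
next
  case (step n)
  have "(\<Sum>j\<in>{4..Suc n}. P a b j) = (\<Sum>j\<in>{4..n}. P a b j) + P a b (Suc n)"
    using step(1) by (simp add: sum.cl_ivl_Suc)
  thus ?case using step(3) mod3_cases[of n] unfolding P_def by (auto simp: mod3_suc)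
qed

lemma sum_split3: "3 \<le> m \<Longrightarrow> (\<Sum>j\<in>{1..m}. (g::nat \<Rightarrow> real) j) = g 1 + g 2 + g 3 + (\<Sum>j\<in>{4..m}. g j)"
proof (induct m rule: dec_induct)
  case base thus ?case by (simp add: eval_nat_numeral)
next
  case (step n)
  thus ?case using step(1) by (simp add: sum.cl_ivl_Suc)
qed

lemma periodic:
  fixes f :: "nat \<Rightarrow> real"
  assumes T: "\<And>j. 4 \<le> j \<Longrightarrow> j+2 \<le> k \<Longrightarrow> f j + f (j+1) + f (j+2) = 0"
  shows "4 \<le> j \<Longrightarrow> j \<le> k \<Longrightarrow> f j = P (f 4) (f 5) j"
proof (induct j rule: less_induct)
  case (less j)
  show ?case
  proof (cases "j \<le> 5")
    case True
    hence "j = 4 \<or> j = 5" using less by auto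
    thus ?thesis unfolding P_def by auto
  next
    case False
    define i where "i = j - 2"
    have i4: "4 \<le> i" and ij: "j = i + 2" using False unfolding i_def by auto
    have "f i + f (i+1) + f (i+2) = 0" using T[OF i4] less ij by simp
    moreover have "f i = P (f 4) (f 5) i" by (rule less(1)) (use less(3) ij i4 in auto)
    moreover have "f (i+1) = P (f 4) (f 5) (i+1)" by (rule less(1)) (use less(3) ij i4 in auto)
    moreover note P_triple[of "f 4" "f 5" i]
    ultimately show ?thesis using ij by simp
  qed
qed

lemma mod3_pred: "0 < (k::nat) \<Longrightarrow> (k-1) mod 3 = (if k mod 3 = 0 then 2 else k mod 3 - 1)"
proof -
  assume "0 < k"
  then obtain j where k: "k = Suc j" by (cases k) auto
  have "j mod 3 < 3" by simp
  thus ?thesis unfolding k by (auto simp: mod_Suc)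
qed


lemma uniq_big:
  fixes f :: "nat \<Rightarrow> real"
  assumes k5: "5 \<le> k" and D: "\<And>i. i \<le> 2*k+4 \<Longrightarrow> Dc k f i"
    and Z: "\<And>j. 2*k+6 \<le> j \<Longrightarrow> f j = 0"
    and R: "(\<Sum>j\<in>{1..k}. f j) = 0"
    and C: "k mod 3 \<noteq> 1 \<or> (f 0 = 0 \<and> f 1 = 0)"
  shows "f j = 0"
proof -
  interpret recf k f by (unfold_locales, rule D)
  define a where "a = f 4"
  define b where "b = f 5"
  have T: "\<And>j. 4 \<le> j \<Longrightarrow> j+2 \<le> k \<Longrightarrow> f j + f (j+1) + f (j+2) = 0"
  proof -
    fix j assume j4: "4 \<le> j" and jk: "j+2 \<le> k"
    have "f (2*k+2+j) = 0" using Z[of "2*k+2+j"] j4 by simp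
    thus "f j + f (j+1) + f (j+2) = 0" using L3[OF jk] by simp
  qed
  have per: "\<And>j. 4 \<le> j \<Longrightarrow> j \<le> k \<Longrightarrow> f j = P a b j"
    using periodic[OF T] unfolding a_def b_def by blast
  have k0: "0 < k" "2 \<le> k" using k5 by auto
  have z4: "f (k-1) + f k + f 1 = 0"
  proof -
    have "f (3*k+1) = 0" by (rule Z) (use k5 in linarith)
    thus ?thesis using L4[OF k0(1)] by linarith
  qed
  have z5: "f k + f 1 + f 2 = 0"
  proof -
    have "f (3*k+2) = 0" by (rule Z) (use k5 in linarith)
    thus ?thesis using L5[OF k0(2)] by linarith
  qed
  have e0: "f 0 + f 1 + f 2 + f 3 = 0"
  proof -
    have "f (3*k+3) = 0" by (rule Z) (use k5 in linarith)
    thus ?thesis using E012(1)[OF k5] by linarith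
  qed
  have e1: "f 1 + f 2 + f 3 + a = 0"
  proof -
    have "f (3*k+4) = 0" by (rule Z) (use k5 in linarith)
    thus ?thesis using E012(2)[OF k5] unfolding a_def by linarith
  qed
  have e2: "f 2 + f 3 + a + b = 0"
  proof -
    have "f (3*k+5) = 0" by (rule Z) (use k5 in linarith)
    thus ?thesis using E012(3)[OF k5] unfolding a_def b_def by linarith
  qed
  have fk1: "f (k-1) = P a b (k-1)" by (rule per) (use k5 in auto)
  have fk: "f k = P a b k" by (rule per) (use k5 in auto)
  have "(\<Sum>j\<in>{4..k}. f j) = (\<Sum>j\<in>{4..k}. P a b j)"
    by (rule sum.cong) (use per in auto)
  moreover have "(\<Sum>j\<in>{1..k}. f j) = f 1 + f 2 + f 3 + (\<Sum>j\<in>{4..k}. f j)"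
    by (rule sum_split3) (use k5 in linarith)
  moreover have "(\<Sum>j\<in>{4..k}. P a b j) = (if k mod 3 = 0 then 0 else if k mod 3 = 1 then a else a + b)"
    by (rule P_sum) (use k5 in linarith)
  ultimately have s: "f 1 + f 2 + f 3 + (if k mod 3 = 0 then 0 else if k mod 3 = 1 then a else a + b) = 0"
    using R by linarith
  have small: "f 0 = 0 \<and> f 1 = 0 \<and> f 2 = 0 \<and> f 3 = 0 \<and> a = 0 \<and> b = 0"
  proof -
    consider "k mod 3 = 0" | "k mod 3 = 1" | "k mod 3 = 2" using mod3_cases[of k] by (elim disjE) auto
    thus ?thesis
    proof cases
      case 1
      have "(k-1) mod 3 = 2" using 1 k5 mod3_pred[of k] by simp
      hence "f (k-1) = b" "f k = -(a+b)" using fk1 fk 1 unfolding P_def by auto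
      moreover have "f 1 + f 2 + f 3 = 0" using s 1 by simp
      ultimately show ?thesis using z4 z5 e0 e1 e2 by (intro conjI; linarith)
    next
      case 2
      have "(k-1) mod 3 = 0" using 2 k5 mod3_pred[of k] by simp
      hence "f (k-1) = -(a+b)" "f k = a" using fk1 fk 2 unfolding P_def by auto
      moreover have "f 1 + f 2 + f 3 + a = 0" using s 2 by simp
      moreover have "f 0 = 0" "f 1 = 0" using C 2 by auto
      ultimately show ?thesis using z4 z5 e0 e1 e2 by (intro conjI; linarith)
    next
      case 3
      have "(k-1) mod 3 = 1" using 3 k5 mod3_pred[of k] by simp
      hence "f (k-1) = a" "f k = b" using fk1 fk 3 unfolding P_def by auto
      moreover have "f 1 + f 2 + f 3 + (a + b) = 0" using s 3 by simp
      ultimately show ?thesis using z4 z5 e0 e1 e2 by (intro conjI; linarith)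
    qed
  qed
  have lowk: "\<And>j. j \<le> k \<Longrightarrow> f j = 0"
  proof -
    fix j assume j: "j \<le> k"
    show "f j = 0"
    proof (cases "j \<le> 3")
      case True
      hence "j = 0 \<or> j = 1 \<or> j = 2 \<or> j = 3" by auto
      thus ?thesis using small by auto
    next
      case False
      thus ?thesis using per[of j] j small unfolding P_def by simp
    qed
  qed
  show ?thesis
  proof (induct j rule: less_induct)
    case (less j)
    show ?case
    proof (cases "j \<le> k")
      case True thus ?thesis using lowk by simp
    next
      case False
      show ?thesis
      proof (cases "2*k+6 \<le> j")
        case True thus ?thesis using Z by simp
      next
        case False2: False
        define i where "i = j - k - 1"
        have ij: "j = i + k + 1" and i: "i \<le> 2*k+4" using False False2 unfolding i_def by auto
        have "Dc k f i" using D i by simp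
        hence "f j + (if k \<le> i then f (i - k) else 0) = f i + f (Suc i)" unfolding Dc_def ij .
        moreover have "f i = 0" "f (Suc i) = 0" using less ij k5 by auto
        moreover have "f (i - k) = 0" using less ij by auto
        ultimately show ?thesis by (auto split: if_splits)
      qed
    qed
  qed
qed



function rf :: "nat \<Rightarrow> (nat \<Rightarrow> real) \<Rightarrow> nat \<Rightarrow> real" where
  "rf k a m = (if m \<le> k \<or> k = 0 then a m
     else rf k a (m-k-1) + rf k a (m-k) - (if 2*k+1 \<le> m then rf k a (m-2*k-1) else 0))"
  by pat_completeness auto
termination by (relation "measure (\<lambda>(k,a,m). m)") auto

declare rf.simps[simp del]

lemma rf_low: "m \<le> k \<Longrightarrow> rf k a m = a m"
  by (subst rf.simps) simp

lemma rf_Dc: "0 < k \<Longrightarrow> Dc k (rf k a) i"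
proof -
  assume k: "0 < k"
  have e: "rf k a (i+k+1) = rf k a (i+k+1-k-1) + rf k a (i+k+1-k) - (if 2*k+1 \<le> i+k+1 then rf k a (i+k+1-2*k-1) else 0)"
    using k by (subst rf.simps) simp
  have i1: "i+k+1-k-1 = i" "i+k+1-k = Suc i" "i+k+1-2*k-1 = i - k" by auto
  have c: "(2*k+1 \<le> i+k+1) = (k \<le> i)" by auto
  show ?thesis unfolding Dc_def using e unfolding i1 c by simp
qed

definition aa :: "real \<Rightarrow> real \<Rightarrow> nat \<Rightarrow> real" where
  "aa a b j = (if j = 0 then a else if j = 1 then b else if j = 2 then -(a+b) else if j = 3 then 0 else P a b j)"

lemma zeros_ex:
  assumes k5: "5 \<le> k" and k1: "k mod 3 = 1"
    and m1: "2*k+6 \<le> m" and m2: "m \<le> 3*k+5"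
  shows "rf k (aa a b) m = 0"
proof -
  let ?g = "rf k (aa a b)"
  interpret recf k ?g by (unfold_locales, rule rf_Dc, use k5 in simp)
  have low: "\<And>j. j \<le> k \<Longrightarrow> ?g j = aa a b j" by (rule rf_low)
  have km: "(k-1) mod 3 = 0" using k1 k5 mod3_pred[of k] by simp
  consider "m \<le> 3*k" | "m = 3*k+1" | "m = 3*k+2" | "m = 3*k+3" | "m = 3*k+4" | "m = 3*k+5"
    using m2 by linarith
  thus ?thesis
  proof cases
    case 1
    define j where "j = m - 2*k - 2"
    have j4: "4 \<le> j" and jk: "j + 2 \<le> k" and mj: "m = 2*k+2+j" using 1 m1 unfolding j_def by auto
    have "?g m = ?g j + ?g (j+1) + ?g (j+2)" unfolding mj by (rule L3[OF jk])
    also have "\<dots> = P a b j + P a b (j+1) + P a b (j+2)"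
      using low[of j] low[of "j+1"] low[of "j+2"] jk j4 unfolding aa_def by simp
    also have "\<dots> = 0" by (rule P_triple)
    finally show ?thesis .
  next
    case 2
    have "?g m = ?g (k-1) + ?g k + ?g 1" unfolding 2 by (rule L4, use k5 in simp)
    also have "\<dots> = P a b (k-1) + P a b k + b"
    proof -
      have "aa a b (k-1) = P a b (k-1)" "aa a b k = P a b k" "aa a b 1 = b" using k5 unfolding aa_def by auto
      thus ?thesis using low[of "k-1"] low[of k] low[of 1] k5 by simp
    qed
    also have "\<dots> = 0" using km k1 unfolding P_def by simp
    finally show ?thesis .
  next
    case 3
    have "?g m = ?g k + ?g 1 + ?g 2" unfolding 3 by (rule L5, use k5 in simp)
    also have "\<dots> = P a b k + b + (-(a+b))"
    proof -
      have "aa a b k = P a b k" "aa a b 1 = b" "aa a b 2 = -(a+b)" using k5 unfolding aa_def by auto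
      thus ?thesis using low[of k] low[of 1] low[of 2] k5 by simp
    qed
    also have "\<dots> = 0" using k1 unfolding P_def by simp
    finally show ?thesis .
  next
    case 4
    have "?g m = ?g 0 + ?g 1 + ?g 2 + ?g 3" unfolding 4 by (rule E012(1)[OF k5])
    also have "\<dots> = 0"
      using low[of 0] low[of 1] low[of 2] low[of 3] k5 unfolding aa_def by simp
    finally show ?thesis .
  next
    case 5
    have "?g m = ?g 1 + ?g 2 + ?g 3 + ?g 4" unfolding 5 by (rule E012(2)[OF k5])
    also have "\<dots> = 0"
      using low[of 4] low[of 1] low[of 2] low[of 3] k5 unfolding aa_def P_def by simp
    finally show ?thesis .
  next
    case 6
    have "?g m = ?g 2 + ?g 3 + ?g 4 + ?g 5" unfolding 6 by (rule E012(3)[OF k5])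
    also have "\<dots> = 0"
      using low[of 4] low[of 5] low[of 2] low[of 3] k5 unfolding aa_def P_def by simp
    finally show ?thesis .
  qed
qed

lemma sum_ex:
  assumes k5: "5 \<le> k" and k1: "k mod 3 = 1"
  shows "(\<Sum>j\<in>{1..k}. rf k (aa a b) j) = 0"
proof -
  have "(\<Sum>j\<in>{1..k}. rf k (aa a b) j) = (\<Sum>j\<in>{1..k}. aa a b j)"
    by (rule sum.cong) (auto simp: rf_low)
  also have "\<dots> = aa a b 1 + aa a b 2 + aa a b 3 + (\<Sum>j\<in>{4..k}. aa a b j)"
    by (rule sum_split3) (use k5 in linarith)
  also have "(\<Sum>j\<in>{4..k}. aa a b j) = (\<Sum>j\<in>{4..k}. P a b j)"
    by (rule sum.cong) (auto simp: aa_def)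
  also have "\<dots> = a" using P_sum[of k a b] k5 k1 by simp
  finally show ?thesis unfolding aa_def by simp
qed

definition Wv :: "nat \<Rightarrow> real \<Rightarrow> real \<Rightarrow> real vec" where
  "Wv k a b = vec (2*k+6) (rf k (aa a b))"

lemma Wv_kernel:
  assumes k5: "5 \<le> k" and k1: "k mod 3 = 1"
  shows "Wv k a b \<in> mat_kernel (A_mat (2*k+6) k)"
proof -
  let ?n = "2*k+6"
  let ?g = "rf k (aa a b)"
  have c: "Wv k a b \<in> carrier_vec ?n" unfolding Wv_def by simp
  have e: "ext (Wv k a b) j = (if j < ?n then ?g j else 0)" for j
    unfolding ext_def Wv_def by simp
  have e2: "ext (Wv k a b) j = ?g j" if "j \<le> 3*k+5" for j
    using e[of j] zeros_ex[OF k5 k1, of j a b] that by auto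
  have s: "(\<Sum>j\<in>{1..k}. ext (Wv k a b) j) = 0"
    using sum_ex[OF k5 k1, of a b] e2 by (simp add: k5)
  have d: "Dc k (ext (Wv k a b)) i" if "Suc i < ?n" for i
  proof -
    have "Dc k ?g i" by (rule rf_Dc, use k5 in simp)
    moreover have "ext (Wv k a b) (i+k+1) = ?g (i+k+1)" "ext (Wv k a b) i = ?g i"
      "ext (Wv k a b) (Suc i) = ?g (Suc i)" "ext (Wv k a b) (i-k) = ?g (i-k)"
      using e2 that by auto
    ultimately show ?thesis unfolding Dc_def by (cases "k \<le> i") auto
  qed
  show ?thesis using kernel_iff[OF c] s d by simp
qed

lemma Wv_idx: "Wv k a b $ 0 = a" "0 < k \<Longrightarrow> Wv k a b $ 1 = b"
  unfolding Wv_def by (auto simp: rf_low aa_def)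

lemma uniq_vec:
  assumes k5: "5 \<le> k" and x: "x \<in> mat_kernel (A_mat (2*k+6) k)"
    and C: "k mod 3 \<noteq> 1 \<or> (x $ 0 = 0 \<and> x $ 1 = 0)"
  shows "x = 0\<^sub>v (2*k+6)"
proof -
  let ?n = "2*k+6"
  have Ac: "A_mat ?n k \<in> carrier_mat ?n ?n" unfolding A_mat_def by simp
  have xc: "x \<in> carrier_vec ?n" using mat_kernel_carrier[OF Ac] x by auto
  have kk: "(\<Sum>j\<in>{1..k}. ext x j) = 0" "\<And>i. Suc i < ?n \<Longrightarrow> Dc k (ext x) i"
    using kernel_iff[OF xc] x by auto
  have dv: "dim_vec x = ?n" using xc by simp
  have z: "\<And>j. ext x j = 0"
  proof (rule uniq_big[OF k5])
    show "\<And>i. i \<le> 2*k+4 \<Longrightarrow> Dc k (ext x) i" using kk(2) by simp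
    show "\<And>j. 2*k+6 \<le> j \<Longrightarrow> ext x j = 0" unfolding ext_def dv by simp
    show "(\<Sum>j\<in>{1..k}. ext x j) = 0" by (rule kk(1))
    show "k mod 3 \<noteq> 1 \<or> ext x 0 = 0 \<and> ext x 1 = 0" using C unfolding ext_def dv by auto
  qed
  show ?thesis
  proof (rule eq_vecI)
    fix i assume "i < dim_vec (0\<^sub>v ?n :: real vec)"
    hence i: "i < ?n" by simp
    show "x $ i = 0\<^sub>v ?n $ i" using z[of i] i unfolding ext_def dv by simp
  qed (simp add: dv)
qed



lemma lt13: "(i::nat) < 13 \<Longrightarrow> i = 0 \<or> i = 1 \<or> i = 2 \<or> i = 3 \<or> i = 4 \<or> i = 5 \<or> i = 6 \<or> i = 7 \<or> i = 8 \<or> i = 9 \<or> i = 10 \<or> i = 11 \<or> i = 12"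
  by arith

lemma small3:
  assumes x: "x \<in> mat_kernel (A_mat 12 3)"
  shows "x = 0\<^sub>v 12"
proof -
  have Ac: "A_mat 12 3 \<in> carrier_mat 12 12" unfolding A_mat_def by simp
  have xc: "x \<in> carrier_vec 12" using mat_kernel_carrier[OF Ac] x by auto
  have dv: "dim_vec x = 12" using xc by simp
  define f where "f = ext x"
  have kk: "(\<Sum>j\<in>{1..3}. f j) = 0" "\<And>i. Suc i < 12 \<Longrightarrow> Dc 3 f i"
    using kernel_iff[OF xc] x unfolding f_def by auto
  have z: "f 12 = 0" "f 13 = 0" "f 14 = 0" unfolding f_def ext_def dv by auto
  have s: "f 1 + f 2 + f 3 = 0" using kk(1) by (simp add: eval_nat_numeral)
  have "Dc 3 f 0" "Dc 3 f 1" "Dc 3 f 2" "Dc 3 f 3" "Dc 3 f 4" "Dc 3 f 5" "Dc 3 f 6" "Dc 3 f 7"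
    "Dc 3 f 8" "Dc 3 f 9" "Dc 3 f 10" using kk(2) by auto
  hence E: "f 4 = f 0 + f 1" "f 5 = f 1 + f 2" "f 6 = f 2 + f 3" "f 7 + f 0 = f 3 + f 4"
    "f 8 + f 1 = f 4 + f 5" "f 9 + f 2 = f 5 + f 6" "f 10 + f 3 = f 6 + f 7" "f 11 + f 4 = f 7 + f 8"
    "f 12 + f 5 = f 8 + f 9" "f 13 + f 6 = f 9 + f 10" "f 14 + f 7 = f 10 + f 11"
    unfolding Dc_def by (simp_all add: eval_nat_numeral)
  have all: "f j = 0" if "j < 12" for j
  proof -
    have "f 0 = 0 \<and> f 1 = 0 \<and> f 2 = 0 \<and> f 3 = 0 \<and> f 4 = 0 \<and> f 5 = 0 \<and> f 6 = 0 \<and> f 7 = 0 \<and>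
          f 8 = 0 \<and> f 9 = 0 \<and> f 10 = 0 \<and> f 11 = 0"
    proof -
    have h4: "f 4 = f 0 + f 1" using E(1) by linarith
    have h5: "f 5 = f 1 + f 2" using E(2) by linarith
    have h6: "f 6 = f 2 + f 3" using E(3) by linarith
    have h7: "f 7 = f 1 + f 3" using E(4) h4 by linarith
    have h8: "f 8 = f 0 + f 1 + f 2" using E(5) h4 h5 by linarith
    have h9: "f 9 = f 1 + f 2 + f 3" using E(6) h5 h6 by linarith
    have h10: "f 10 = f 1 + f 2 + f 3" using E(7) h6 h7 by linarith
    have h11: "f 11 = f 1 + f 2 + f 3" using E(8) h7 h8 h4 by linarith
    have c8: "0 = f 0 + f 1 + f 2 + f 3" using E(9) z h8 h9 h5 by linarith
    have c9: "0 = 2 * f 1 + f 2 + f 3" using E(10) z h9 h10 h6 by linarith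
    have c10: "0 = f 1 + 2 * f 2 + f 3" using E(11) z h10 h11 h7 by linarith
    have b: "f 0 = 0 \<and> f 1 = 0 \<and> f 2 = 0 \<and> f 3 = 0" using c8 c9 c10 s by (intro conjI; linarith)
    show "f 0 = 0 \<and> f 1 = 0 \<and> f 2 = 0 \<and> f 3 = 0 \<and> f 4 = 0 \<and> f 5 = 0 \<and> f 6 = 0 \<and> f 7 = 0 \<and> f 8 = 0 \<and> f 9 = 0 \<and> f 10 = 0 \<and> f 11 = 0" using b h4 h5 h6 h7 h8 h9 h10 h11 by simp
    qed
    moreover have "j = 0 \<or> j = 1 \<or> j = 2 \<or> j = 3 \<or> j = 4 \<or> j = 5 \<or> j = 6 \<or> j = 7 \<or> j = 8 \<or> j = 9 \<or> j = 10 \<or> j = 11"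
      using that lt13[of j] by auto
    ultimately show ?thesis by auto
  qed
  show ?thesis
  proof (rule eq_vecI)
    fix i assume "i < dim_vec (0\<^sub>v 12 :: real vec)"
    hence i: "i < 12" by simp
    show "x $ i = 0\<^sub>v 12 $ i" using all[OF i] i unfolding f_def ext_def dv by simp
  qed (simp add: dv)
qed

definition U4 :: "real vec" where
  "U4 = vec 14 (\<lambda>i. [1,0,-1,0,1,1,-1,-1,1,1,0,-1,0,1] ! i)"
definition V4 :: "real vec" where
  "V4 = vec 14 (\<lambda>i. [0,1,-1,0,0,1,0,-1,0,1,0,0,-1,1] ! i)"

lemma lt14: "(i::nat) < 14 \<Longrightarrow> i = 0 \<or> i = 1 \<or> i = 2 \<or> i = 3 \<or> i = 4 \<or> i = 5 \<or> i = 6 \<or> i = 7 \<or> i = 8 \<or> i = 9 \<or> i = 10 \<or> i = 11 \<or> i = 12 \<or> i = 13"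
  by arith

lemma U4_kernel: "U4 \<in> mat_kernel (A_mat 14 4)"
proof -
  have c: "U4 \<in> carrier_vec 14" unfolding U4_def by simp
  have s: "(\<Sum>j\<in>{1..4}. ext U4 j) = 0" unfolding ext_def U4_def by (simp add: eval_nat_numeral)
  have d: "Dc 4 (ext U4) i" if "Suc i < 14" for i
  proof -
    have "i < 13" using that by simp
    hence "i = 0 \<or> i = 1 \<or> i = 2 \<or> i = 3 \<or> i = 4 \<or> i = 5 \<or> i = 6 \<or> i = 7 \<or> i = 8 \<or> i = 9 \<or> i = 10 \<or> i = 11 \<or> i = 12"
      using lt13 by blast
    thus ?thesis unfolding Dc_def ext_def U4_def by (elim disjE; simp add: eval_nat_numeral)
  qed
  show ?thesis using kernel_iff[OF c] s d by simp
qed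

lemma V4_kernel: "V4 \<in> mat_kernel (A_mat 14 4)"
proof -
  have c: "V4 \<in> carrier_vec 14" unfolding V4_def by simp
  have s: "(\<Sum>j\<in>{1..4}. ext V4 j) = 0" unfolding ext_def V4_def by (simp add: eval_nat_numeral)
  have d: "Dc 4 (ext V4) i" if "Suc i < 14" for i
  proof -
    have "i < 13" using that by simp
    hence "i = 0 \<or> i = 1 \<or> i = 2 \<or> i = 3 \<or> i = 4 \<or> i = 5 \<or> i = 6 \<or> i = 7 \<or> i = 8 \<or> i = 9 \<or> i = 10 \<or> i = 11 \<or> i = 12"
      using lt13 by blast
    thus ?thesis unfolding Dc_def ext_def V4_def by (elim disjE; simp add: eval_nat_numeral)
  qed
  show ?thesis using kernel_iff[OF c] s d by simp
qed

lemma small4: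
  assumes x: "x \<in> mat_kernel (A_mat 14 4)" and x0: "x $ 0 = 0" and x1: "x $ 1 = 0"
  shows "x = 0\<^sub>v 14"
proof -
  have Ac: "A_mat 14 4 \<in> carrier_mat 14 14" unfolding A_mat_def by simp
  have xc: "x \<in> carrier_vec 14" using mat_kernel_carrier[OF Ac] x by auto
  have dv: "dim_vec x = 14" using xc by simp
  define f where "f = ext x"
  have kk: "(\<Sum>j\<in>{1..4}. f j) = 0" "\<And>i. Suc i < 14 \<Longrightarrow> Dc 4 f i"
    using kernel_iff[OF xc] x unfolding f_def by auto
  have z: "f 14 = 0" "f 15 = 0" "f 16 = 0" "f 17 = 0" unfolding f_def ext_def dv by auto
  have z01: "f 0 = 0" "f 1 = 0" using x0 x1 unfolding f_def ext_def dv by auto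
  have s: "f 1 + f 2 + f 3 + f 4 = 0" using kk(1) by (simp add: eval_nat_numeral)
  have "Dc 4 f 0" "Dc 4 f 1" "Dc 4 f 2" "Dc 4 f 3" "Dc 4 f 4" "Dc 4 f 5" "Dc 4 f 6" "Dc 4 f 7"
    "Dc 4 f 8" "Dc 4 f 9" "Dc 4 f 10" "Dc 4 f 11" "Dc 4 f 12" using kk(2) by auto
  hence E: "f 5 = f 0 + f 1" "f 6 = f 1 + f 2" "f 7 = f 2 + f 3" "f 8 = f 3 + f 4"
    "f 9 + f 0 = f 4 + f 5" "f 10 + f 1 = f 5 + f 6" "f 11 + f 2 = f 6 + f 7" "f 12 + f 3 = f 7 + f 8"
    "f 13 + f 4 = f 8 + f 9" "f 14 + f 5 = f 9 + f 10" "f 15 + f 6 = f 10 + f 11" "f 16 + f 7 = f 11 + f 12"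
    "f 17 + f 8 = f 12 + f 13"
    unfolding Dc_def by (simp_all add: eval_nat_numeral)
  have all: "f j = 0" if "j < 14" for j
  proof -
    have "f 0 = 0 \<and> f 1 = 0 \<and> f 2 = 0 \<and> f 3 = 0 \<and> f 4 = 0 \<and> f 5 = 0 \<and> f 6 = 0 \<and> f 7 = 0 \<and>
          f 8 = 0 \<and> f 9 = 0 \<and> f 10 = 0 \<and> f 11 = 0 \<and> f 12 = 0 \<and> f 13 = 0"
    proof -
    have h5: "f 5 = f 0 + f 1" using E(1) by linarith
    have h6: "f 6 = f 1 + f 2" using E(2) by linarith
    have h7: "f 7 = f 2 + f 3" using E(3) by linarith
    have h8: "f 8 = f 3 + f 4" using E(4) by linarith
    have h9: "f 9 = f 1 + f 4" using E(5) h5 by linarith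
    have h10: "f 10 = f 0 + f 1 + f 2" using E(6) h5 h6 by linarith
    have h11: "f 11 = f 1 + f 2 + f 3" using E(7) h6 h7 by linarith
    have h12: "f 12 = f 2 + f 3 + f 4" using E(8) h7 h8 by linarith
    have h13: "f 13 = f 1 + f 3 + f 4" using E(9) h8 h9 by linarith
    have c9: "0 = f 1 + f 2 + f 4" using E(10) z h9 h10 h5 by linarith
    have c10: "0 = f 0 + f 1 + f 2 + f 3" using E(11) z h10 h11 h6 by linarith
    have c11: "0 = f 1 + f 2 + f 3 + f 4" using E(12) z h11 h12 h7 by linarith
    have c12: "0 = f 1 + f 2 + f 3 + f 4" using E(13) z h12 h13 h8 by linarith
    have b: "f 0 = 0 \<and> f 1 = 0 \<and> f 2 = 0 \<and> f 3 = 0 \<and> f 4 = 0" using c9 c10 c11 c12 s z01 by (intro conjI; linarith)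
    show "f 0 = 0 \<and> f 1 = 0 \<and> f 2 = 0 \<and> f 3 = 0 \<and> f 4 = 0 \<and> f 5 = 0 \<and> f 6 = 0 \<and> f 7 = 0 \<and> f 8 = 0 \<and> f 9 = 0 \<and> f 10 = 0 \<and> f 11 = 0 \<and> f 12 = 0 \<and> f 13 = 0" using b h5 h6 h7 h8 h9 h10 h11 h12 h13 by simp
    qed
    moreover have "j = 0 \<or> j = 1 \<or> j = 2 \<or> j = 3 \<or> j = 4 \<or> j = 5 \<or> j = 6 \<or> j = 7 \<or> j = 8 \<or> j = 9 \<or> j = 10 \<or> j = 11 \<or> j = 12 \<or> j = 13"
      using that lt14[of j] by auto
    ultimately show ?thesis by auto
  qed
  show ?thesis
  proof (rule eq_vecI)
    fix i assume "i < dim_vec (0\<^sub>v 14 :: real vec)"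
    hence i: "i < 14" by simp
    show "x $ i = 0\<^sub>v 14 $ i" using all[OF i] i unfolding f_def ext_def dv by simp
  qed (simp add: dv)
qed


theorem theorem8p6:
  fixes k :: nat
  assumes "k > 2"
  shows "N_null (2 * k + 6) k = (if k mod 3 = 1 then 2 else 0)"
proof -
  have Ac: "A_mat (2*k+6) k \<in> carrier_mat (2*k+6) (2*k+6)" unfolding A_mat_def by simp
  consider "k = 3" | "k = 4" | "5 \<le> k" using assms by linarith
  thus ?thesis
  proof cases
    case 1
    have A3: "A_mat 12 3 \<in> carrier_mat 12 12" unfolding A_mat_def by simp
    have "kernel_dim (A_mat 12 3) = 0" by (rule kernel_dim_zero[OF A3 small3])
    thus ?thesis unfolding N_null_def 1 by simp
  next
    case 2
    have A4: "A_mat 14 4 \<in> carrier_mat 14 14" unfolding A_mat_def by simp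
    have "kernel_dim (A_mat 14 4) = 2"
      by (rule kernel_dim_two[OF A4 U4_kernel V4_kernel, of 0 1])
         (auto simp: U4_def V4_def intro: small4)
    thus ?thesis unfolding N_null_def 2 by simp
  next
    case 3
    show ?thesis
    proof (cases "k mod 3 = 1")
      case True
      have "kernel_dim (A_mat (2*k+6) k) = 2"
      proof (rule kernel_dim_two[OF Ac Wv_kernel[OF 3 True, of 1 0] Wv_kernel[OF 3 True, of 0 1], of 0 1])
        show "Wv k 1 0 $ 0 = 1" "Wv k 0 1 $ 0 = 0" by (simp_all add: Wv_idx)
        have k0: "0 < k" using 3 by simp
        show "Wv k 1 0 $ 1 = 0" by (rule Wv_idx(2)[OF k0])
        show "Wv k 0 1 $ 1 = 1" by (rule Wv_idx(2)[OF k0])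
        show "0 < 2*k+6" "1 < 2*k+6" by auto
        show "\<And>x. x \<in> mat_kernel (A_mat (2*k+6) k) \<Longrightarrow> x $ 0 = 0 \<Longrightarrow> x $ 1 = 0 \<Longrightarrow> x = 0\<^sub>v (2*k+6)"
          using uniq_vec[OF 3] by blast
      qed
      thus ?thesis unfolding N_null_def using True by simp
    next
      case False
      have "kernel_dim (A_mat (2*k+6) k) = 0"
        by (rule kernel_dim_zero[OF Ac]) (use uniq_vec[OF 3] False in blast)
      thus ?thesis unfolding N_null_def using False by simp
    qed
  qed
qed

end
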